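(* Let $(M,\eta)$ be a set operad, $\mathcal A$ a commutative $\mathbb K$-algebra, and $\omega_1,\omega_2:\mathcal N_M\to\mathcal A$ algebra homomorphisms. Then, as formal power series with coefficients in $\mathcal A$, $$M^{\omega_1}\big(M^{\omega_2}(x)\big)=M^{\omega_2\ast\omega_1}(x).$$
   Context: $\mathcal N_M$ is the natural Hopf algebra of the set operad $M$. As an algebra it is $\mathbb K[t_\alpha:\alpha\text{ a type of }M\text{-structures}]$ with $t_\bullet=1$ ($\bullet$ the type of singleton structures). Its coproduct is multiplicative with $\Delta(t_{\tau(m)})=\sum_{(a,m')\in M(M)[U],\ \eta(a,m')=m}t_{\tau(a)}\otimes t_{\tau(m')}$, where $t_{\tau(a)}=\prod_{B\in\pi}t_{\tau(m_B)}$ for an assembly $a=\{m_B\}_{B\in\pi}$. An algebra homomorphism $\omega:\mathcal N_M\to\mathcal A$ is called a weight. For $[n]=\{1,\dots,n\}$ set $|M[n]|_\omega=\sum_{m\in M[[n]]}\omega(t_{\tau(m)})$, and define $M^\omega(x)=x+\sum_{n\ge2}|M[n]|_\omega\,\frac{x^n}{n!}$. The convolution is $\omega_1\ast\omega_2=\mu\circ(\omega_1\otimes\omega_2)\circ\Delta$, with $\mu$ the multiplication of $\mathcal A$. *)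

theory Defs
  imports "HOL-Library.Disjoint_Sets" "HOL-Computational_Algebra.Formal_Power_Series"
begin

(* An M-structure on U is an element
   m \<in> M U; transport along a bijection sigma : U -> V is  rl sigma m \<in> M V.
   A structure on a partition pi (a set of blocks) is encoded, via the canonical
   bijection B \<mapsto> Min B, as a structure on the label set  Min ` pi. *)

(* M(M)[U]: a partition pi of U, an assembly f (f B \<in> M B for blocks B, undefined
   elsewhere), and an M-structure m' on the set of blocks (encoded on Min ` pi). *)
definition comp_structs ::
  "(nat set \<Rightarrow> 's set) \<Rightarrow> nat set \<Rightarrow> (nat set set \<times> (nat set \<Rightarrow> 's) \<times> 's) set" where
  "comp_structs M U = {(\<pi>, f, m'). partition_on U \<pi> \<and> (\<forall>B\<in>\<pi>. f B \<in> M B)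
       \<and> (\<forall>B. B \<notin> \<pi> \<longrightarrow> f B = undefined) \<and> m' \<in> M (Min ` \<pi>)}"

definition block_relabel :: "(nat \<Rightarrow> nat) \<Rightarrow> nat set set \<Rightarrow> nat \<Rightarrow> nat" where
  "block_relabel \<sigma> \<pi> i = Min (\<sigma> ` (THE B. B \<in> \<pi> \<and> Min B = i))"

(* for associativity: rho a partition of the (encoded) block set Min ` pi *)
definition merge_part :: "nat set set \<Rightarrow> nat set set \<Rightarrow> nat set set" where
  "merge_part \<pi> \<rho> = (\<lambda>D. \<Union>{B\<in>\<pi>. Min B \<in> D}) ` \<rho>"

locale set_operad =
  fixes M :: "nat set \<Rightarrow> 's set"
    and rl :: "(nat \<Rightarrow> nat) \<Rightarrow> 's \<Rightarrow> 's"
    and eta :: "nat set set \<Rightarrow> (nat set \<Rightarrow> 's) \<Rightarrow> 's \<Rightarrow> 's"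
    and e :: "nat \<Rightarrow> 's"
  assumes finite_M: "finite U \<Longrightarrow> finite (M U)"
    and rl_closed: "finite U \<Longrightarrow> bij_betw \<sigma> U V \<Longrightarrow> m \<in> M U \<Longrightarrow> rl \<sigma> m \<in> M V"
    and rl_local: "m \<in> M U \<Longrightarrow> (\<forall>x\<in>U. \<sigma> x = \<sigma>' x) \<Longrightarrow> rl \<sigma> m = rl \<sigma>' m"
    and rl_id: "m \<in> M U \<Longrightarrow> rl id m = m"
    and rl_comp: "finite U \<Longrightarrow> bij_betw \<sigma> U V \<Longrightarrow> bij_betw \<tau> V W \<Longrightarrow> m \<in> M U
                  \<Longrightarrow> rl (\<tau> \<circ> \<sigma>) m = rl \<tau> (rl \<sigma> m)"
    and M_empty: "M {} = {}"
    and M_singleton: "M {u} = {e u}"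
    and eta_closed: "finite U \<Longrightarrow> (\<pi>, f, m') \<in> comp_structs M U \<Longrightarrow> eta \<pi> f m' \<in> M U"
    and eta_equivariant: "finite U \<Longrightarrow> bij_betw \<sigma> U V \<Longrightarrow> (\<pi>, f, m') \<in> comp_structs M U \<Longrightarrow>
         rl \<sigma> (eta \<pi> f m') =
         eta (image \<sigma> ` \<pi>)
             (\<lambda>B'. if B' \<in> image \<sigma> ` \<pi> then rl \<sigma> (f (inv_into U \<sigma> ` B')) else undefined)
             (rl (block_relabel \<sigma> \<pi>) m')"
    and unit_left: "finite U \<Longrightarrow> m \<in> M U \<Longrightarrow>
         eta ((\<lambda>u. {u}) ` U) (\<lambda>B. if B \<in> (\<lambda>u. {u}) ` U then e (Min B) else undefined) m = m"
    and unit_right: "finite U \<Longrightarrow> m \<in> M U \<Longrightarrow>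
         eta {U} (\<lambda>B. if B = U then m else undefined) (e (Min U)) = m"
    and assoc: "finite U \<Longrightarrow> partition_on U \<pi> \<Longrightarrow> (\<forall>B\<in>\<pi>. f B \<in> M B) \<Longrightarrow>
         (\<forall>B. B \<notin> \<pi> \<longrightarrow> f B = undefined) \<Longrightarrow> (\<rho>, g, m) \<in> comp_structs M (Min ` \<pi>) \<Longrightarrow>
         eta \<pi> f (eta \<rho> g m) =
         eta (merge_part \<pi> \<rho>)
             (\<lambda>V. if V \<in> merge_part \<pi> \<rho>
                   then eta {B\<in>\<pi>. B \<subseteq> V} (\<lambda>B. if B \<in> \<pi> \<and> B \<subseteq> V then f B else undefined)
                            (g (Min ` {B\<in>\<pi>. B \<subseteq> V}))
                   else undefined)
             m"

(* the type (isomorphism class) of the M-structure m on U *)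
definition otype :: "((nat \<Rightarrow> nat) \<Rightarrow> 's \<Rightarrow> 's) \<Rightarrow> nat set \<Rightarrow> 's \<Rightarrow> (nat set \<times> 's) set" where
  "otype rl U m = {(V, rl \<sigma> m) | V \<sigma>. finite V \<and> bij_betw \<sigma> U V}"

(* A weight N_M -> A is an algebra homomorphism of the polynomial algebra
   K[t_alpha] with t_bullet = 1; it is given by its values on the generators t_alpha,
   i.e. a function on types, which must send the singleton type to 1. *)
definition weight :: "((nat \<Rightarrow> nat) \<Rightarrow> 's \<Rightarrow> 's) \<Rightarrow> (nat \<Rightarrow> 's) \<Rightarrow> ((nat set \<times> 's) set \<Rightarrow> 'a::comm_ring_1) \<Rightarrow> bool" where
  "weight rl e \<omega> \<longleftrightarrow> (\<forall>u. \<omega> (otype rl {u} (e u)) = 1)"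

(* (omega2 * omega1)(t_{tau(m)}) for m \<in> M[U], computed from the coproduct formula:
   sum over (a, m') \<in> M(M)[U] with eta(a, m') = m of omega2(t_{tau(a)}) * omega1(t_{tau(m')}) *)
definition conv_val ::
  "(nat set \<Rightarrow> 's set) \<Rightarrow> ((nat \<Rightarrow> nat) \<Rightarrow> 's \<Rightarrow> 's) \<Rightarrow> (nat set set \<Rightarrow> (nat set \<Rightarrow> 's) \<Rightarrow> 's \<Rightarrow> 's)
   \<Rightarrow> ((nat set \<times> 's) set \<Rightarrow> 'a::comm_ring_1) \<Rightarrow> ((nat set \<times> 's) set \<Rightarrow> 'a) \<Rightarrow> nat set \<Rightarrow> 's \<Rightarrow> 'a" where
  "conv_val M rl eta \<omega>2 \<omega>1 U m =
     (\<Sum>(\<pi>, f, m') \<in> {(\<pi>, f, m') \<in> comp_structs M U. eta \<pi> f m' = m}.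
        (\<Prod>B\<in>\<pi>. \<omega>2 (otype rl B (f B))) * \<omega>1 (otype rl (Min ` \<pi>) m'))"

definition wcard :: "(nat set \<Rightarrow> 's set) \<Rightarrow> (nat set \<Rightarrow> 's \<Rightarrow> 'a::comm_ring_1) \<Rightarrow> nat \<Rightarrow> 'a" where
  "wcard M val n = (\<Sum>m\<in>M {1..n}. val {1..n} m)"

(* A commutative K-algebra A: a commutative ring with structure ring homomorphism K -> A *)
definition K_algebra_map :: "('k::field_char_0 \<Rightarrow> 'a::comm_ring_1) \<Rightarrow> bool" where
  "K_algebra_map \<phi> \<longleftrightarrow> \<phi> 1 = 1 \<and> (\<forall>x y. \<phi> (x + y) = \<phi> x + \<phi> y) \<and> (\<forall>x y. \<phi> (x * y) = \<phi> x * \<phi> y)"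

definition egf :: "('k::field_char_0 \<Rightarrow> 'a::comm_ring_1) \<Rightarrow> (nat set \<Rightarrow> 's set)
                   \<Rightarrow> (nat set \<Rightarrow> 's \<Rightarrow> 'a) \<Rightarrow> 'a fps" where
  "egf \<phi> M val = Abs_fps (\<lambda>n. if n = 0 then 0 else if n = 1 then 1
                               else wcard M val n * \<phi> (inverse (fact n)))"

end

theory Submission
  imports Defs
begin
unbundle fps_syntax

fun Qf :: "(nat \<Rightarrow> 'a::comm_ring_1) \<Rightarrow> nat \<Rightarrow> nat set \<Rightarrow> 'a" where
  "Qf Bv 0 U = (if U = {} then 1 else 0)"
| "Qf Bv (Suc k) U = (\<Sum>S\<in>Pow U. Bv (card S) * Qf Bv k (U - S))"

fun qf :: "(nat \<Rightarrow> 'a::comm_ring_1) \<Rightarrow> nat \<Rightarrow> nat \<Rightarrow> 'a" where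
  "qf Bv 0 n = (if n = 0 then 1 else 0)"
| "qf Bv (Suc k) n = (\<Sum>i\<le>n. of_nat (n choose i) * Bv i * qf Bv k (n - i))"

definition Rf :: "(nat \<Rightarrow> 'a::comm_ring_1) \<Rightarrow> nat \<Rightarrow> nat set \<Rightarrow> 'a" where
  "Rf Bv k U = (\<Sum>\<pi>\<in>{\<pi>. partition_on U \<pi> \<and> card \<pi> = k}. \<Prod>B\<in>\<pi>. Bv (card B))"

lemma Qf_qf: "finite U \<Longrightarrow> Qf Bv k U = qf Bv k (card U)"
proof (induction k arbitrary: U)
  case 0 then show ?case by auto
next
  case (Suc k)
  have "Qf Bv (Suc k) U = (\<Sum>S\<in>Pow U. Bv (card S) * qf Bv k (card U - card S))"
    using Suc by (auto intro!: sum.cong simp: card_Diff_subset finite_subset)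
  also have "\<dots> = (\<Sum>i\<in>{..card U}. \<Sum>S\<in>{S. S \<in> Pow U \<and> card S = i}. Bv (card S) * qf Bv k (card U - card S))"
    by (rule sum.group[symmetric]) (use Suc.prems in \<open>auto intro: card_mono\<close>)
  also have "\<dots> = (\<Sum>i\<in>{..card U}. of_nat (card U choose i) * Bv i * qf Bv k (card U - i))"
  proof (rule sum.cong[OF refl])
    fix i
    have "(\<Sum>S\<in>{S. S \<in> Pow U \<and> card S = i}. Bv (card S) * qf Bv k (card U - card S))
        = (\<Sum>S\<in>{S. S \<subseteq> U \<and> card S = i}. Bv i * qf Bv k (card U - i))"
      by (rule sum.cong) auto
    also have "\<dots> = of_nat (card U choose i) * Bv i * qf Bv k (card U - i)"
      using n_subsets[OF Suc.prems, of i] by simp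
    finally show "(\<Sum>S\<in>{S. S \<in> Pow U \<and> card S = i}. Bv (card S) * qf Bv k (card U - card S))
        = of_nat (card U choose i) * Bv i * qf Bv k (card U - i)" .
  qed
  finally show ?case by simp
qed

lemma partition_remove:
  assumes "partition_on U \<pi>" "S \<in> \<pi>"
  shows "partition_on (U - S) (\<pi> - {S})"
proof -
  have d: "disjnt S (\<Union>(\<pi> - {S}))"
    using partition_onD2[OF assms(1)] assms(2) by (auto simp: disjnt_def disjoint_def)
  have "insert S (\<pi> - {S}) = \<pi>" using assms(2) by auto
  then show ?thesis using partition_on_insert[OF d, of U] assms(1) by simp
qed

lemma partition_add:
  assumes "partition_on (U - S) \<pi>" "S \<subseteq> U" "S \<noteq> {}"
  shows "partition_on U (insert S \<pi>)" "S \<notin> \<pi>"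
proof -
  have d: "disjnt S (\<Union>\<pi>)" using partition_onD1[OF assms(1)] by (auto simp: disjnt_def)
  show "partition_on U (insert S \<pi>)" using partition_on_insert[OF d, of U] assms by simp
  show "S \<notin> \<pi>" using partition_onD1[OF assms(1)] assms(3) by auto
qed

lemma Qf_Rf:
  assumes "finite U" "Bv 0 = 0"
  shows "Qf Bv k U = of_nat (fact k) * Rf Bv k U"
  using assms(1)
proof (induction k arbitrary: U)
  case 0
  have "{\<pi>. partition_on U \<pi> \<and> card \<pi> = 0} = (if U = {} then {{}} else {})"
  proof (cases "U = {}")
    case True then show ?thesis by (auto simp: partition_on_empty)
  next
    case False
    have "\<pi> = {}" if "partition_on U \<pi>" "card \<pi> = 0" for \<pi>
      using finite_elements[OF 0 that(1)] that(2) by simp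
    then show ?thesis using False partition_onD1[of U "{}"] by auto
  qed
  then show ?case by (simp add: Rf_def)
next
  case (Suc k)
  define P where "P = (\<lambda>(V::nat set) j. {\<pi>. partition_on V \<pi> \<and> card \<pi> = j})"
  define X where "X = (SIGMA S:Pow U - {{}}. P (U - S) k)"
  define Y where "Y = (SIGMA \<pi>:P U (Suc k). \<pi>)"
  have finP: "finite (P V j)" if "finite V" for V j
    unfolding P_def by (rule finite_subset[OF _ finitely_many_partition_on[OF that]]) auto
  have finX: "finite X" unfolding X_def using Suc.prems finP by auto
  have finY: "finite Y" unfolding Y_def
    by (rule finite_SigmaI) (use Suc.prems finP finite_elements in \<open>auto simp: P_def\<close>)
  have "Qf Bv (Suc k) U = (\<Sum>S\<in>Pow U. Bv (card S) * (of_nat (fact k) * Rf Bv k (U - S)))"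
    using Suc by (auto intro!: sum.cong)
  also have "\<dots> = (\<Sum>S\<in>Pow U - {{}}. Bv (card S) * (of_nat (fact k) * Rf Bv k (U - S)))"
    by (rule sum.mono_neutral_right) (use Suc.prems assms(2) in auto)
  also have "\<dots> = of_nat (fact k) * (\<Sum>S\<in>Pow U - {{}}. \<Sum>\<pi>\<in>P (U - S) k. Bv (card S) * (\<Prod>B\<in>\<pi>. Bv (card B)))"
    by (simp add: Rf_def P_def sum_distrib_left mult_ac)
  also have "(\<Sum>S\<in>Pow U - {{}}. \<Sum>\<pi>\<in>P (U - S) k. Bv (card S) * (\<Prod>B\<in>\<pi>. Bv (card B)))
      = (\<Sum>(S, \<pi>)\<in>X. Bv (card S) * (\<Prod>B\<in>\<pi>. Bv (card B)))"
    unfolding X_def by (rule sum.Sigma) (use Suc.prems finP in auto)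
  also have "\<dots> = (\<Sum>(\<pi>, S)\<in>Y. \<Prod>B\<in>\<pi>. Bv (card B))"
  proof -
    have bij: "bij_betw (\<lambda>(\<pi>, S). (S, \<pi> - {S})) Y X"
    proof (rule bij_betw_byWitness[where f' = "\<lambda>(S, \<pi>). (insert S \<pi>, S)"])
      show "\<forall>a\<in>Y. (case case a of (\<pi>, S) \<Rightarrow> (S, \<pi> - {S}) of (S, \<pi>) \<Rightarrow> (insert S \<pi>, S)) = a"
        unfolding Y_def by auto
      show "\<forall>a'\<in>X. (case case a' of (S, \<pi>) \<Rightarrow> (insert S \<pi>, S) of (\<pi>, S) \<Rightarrow> (S, \<pi> - {S})) = a'"
        unfolding X_def P_def using partition_add by fastforce
      show "(\<lambda>(\<pi>, S). (S, \<pi> - {S})) ` Y \<subseteq> X"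
      proof clarify
        fix \<pi> S assume "(\<pi>, S) \<in> Y"
        then have h: "partition_on U \<pi>" "card \<pi> = Suc k" "S \<in> \<pi>" unfolding Y_def P_def by auto
        have "finite \<pi>" using finite_elements[OF Suc.prems h(1)] .
        then show "(S, \<pi> - {S}) \<in> X" using h partition_remove[OF h(1,3)]
          partition_onD1[OF h(1)] partition_onD3[OF h(1)]
          unfolding X_def P_def by auto
      qed
      show "(\<lambda>(S, \<pi>). (insert S \<pi>, S)) ` X \<subseteq> Y"
      proof clarify
        fix \<pi> S assume "(S, \<pi>) \<in> X"
        then have h: "partition_on (U - S) \<pi>" "card \<pi> = k" "S \<subseteq> U" "S \<noteq> {}"
          unfolding X_def P_def by auto
        have "finite \<pi>" using finite_elements[OF _ h(1)] Suc.prems by auto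
        then show "(insert S \<pi>, S) \<in> Y" using h partition_add[OF h(1,3,4)]
          unfolding Y_def P_def by auto
      qed
    qed
    have "(\<Sum>(\<pi>, S)\<in>Y. \<Prod>B\<in>\<pi>. Bv (card B))
        = (\<Sum>(\<pi>, S)\<in>Y. Bv (card S) * (\<Prod>B\<in>\<pi> - {S}. Bv (card B)))"
    proof (rule sum.cong[OF refl], clarify)
      fix \<pi> S assume "(\<pi>, S) \<in> Y"
      then have pp: "partition_on U \<pi>" and sp: "S \<in> \<pi>" unfolding Y_def P_def by auto
      show "(\<Prod>B\<in>\<pi>. Bv (card B)) = Bv (card S) * (\<Prod>B\<in>\<pi> - {S}. Bv (card B))"
        by (rule prod.remove[OF finite_elements[OF Suc.prems pp] sp])
    qed
    also have "\<dots> = (\<Sum>(S, \<pi>)\<in>X. Bv (card S) * (\<Prod>B\<in>\<pi>. Bv (card B)))"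
      using sum.reindex_bij_betw[OF bij, of "\<lambda>(S, \<pi>). Bv (card S) * (\<Prod>B\<in>\<pi>. Bv (card B))"]
      by (simp add: case_prod_unfold)
    finally show ?thesis by simp
  qed
  also have "\<dots> = (\<Sum>\<pi>\<in>P U (Suc k). \<Sum>S\<in>\<pi>. \<Prod>B\<in>\<pi>. Bv (card B))"
    unfolding Y_def by (rule sum.Sigma[symmetric]) (use Suc.prems finP finite_elements in \<open>auto simp: P_def\<close>)
  also have "\<dots> = (\<Sum>\<pi>\<in>P U (Suc k). of_nat (Suc k) * (\<Prod>B\<in>\<pi>. Bv (card B)))"
    by (rule sum.cong) (auto simp: P_def)
  also have "\<dots> = of_nat (Suc k) * Rf Bv (Suc k) U"
    by (simp add: Rf_def P_def sum_distrib_left)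
  finally show ?case by (simp add: algebra_simps)
qed

lemma partition_Min_inj:
  fixes U :: "nat set"
  assumes "finite U" "partition_on U \<pi>"
  shows "inj_on Min \<pi>" "Min ` \<pi> \<subseteq> U" "card (Min ` \<pi>) = card \<pi>"
proof -
  have mem: "Min B \<in> B" if "B \<in> \<pi>" for B
    using partition_onD3[OF assms(2)] partition_onD1[OF assms(2)] that assms(1)
    by (intro Min_in) (auto intro: finite_subset)
  show inj: "inj_on Min \<pi>"
  proof (rule inj_onI)
    fix B B' assume "B \<in> \<pi>" "B' \<in> \<pi>" "Min B = Min B'"
    then show "B = B'" using mem partition_onD2[OF assms(2)]
      by (metis disjoint_def disjoint_iff)
  qed
  show "Min ` \<pi> \<subseteq> U" using mem partition_onD1[OF assms(2)] by auto
  show "card (Min ` \<pi>) = card \<pi>" using card_image[OF inj] .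
qed

lemma partition_card_le:
  fixes U :: "nat set"
  assumes "finite U" "partition_on U \<pi>"
  shows "card \<pi> \<le> card U"
  using partition_Min_inj[OF assms] card_mono[OF assms(1)] by metis

lemma phi_of_nat:
  assumes "K_algebra_map \<phi>"
  shows "\<phi> (of_nat n) = of_nat n"
proof (induction n)
  case 0
  have "\<phi> 0 = \<phi> 0 + \<phi> 0" using assms unfolding K_algebra_map_def by (metis add_0)
  then show ?case by simp
next
  case (Suc n) then show ?case using assms unfolding K_algebra_map_def by simp
qed

lemma c_mult:
  fixes \<phi> :: "'k::field_char_0 \<Rightarrow> 'a::comm_ring_1"
  assumes "K_algebra_map \<phi>" "i \<le> n"
  shows "\<phi> (inverse (fact i)) * \<phi> (inverse (fact (n - i))) = of_nat (n choose i) * \<phi> (inverse (fact n))"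
proof -
  have "inverse (fact i) * inverse (fact (n - i)) = (of_nat (n choose i) :: 'k) * inverse (fact n)"
    using binomial_fact[OF assms(2), where 'a='k] by (simp add: field_simps)
  then have "\<phi> (inverse (fact i) * inverse (fact (n - i))) = \<phi> (of_nat (n choose i) * inverse (fact n))"
    by simp
  then show ?thesis using assms(1) phi_of_nat[OF assms(1)] unfolding K_algebra_map_def by simp
qed

lemma c_fact:
  fixes \<phi> :: "'k::field_char_0 \<Rightarrow> 'a::comm_ring_1"
  assumes "K_algebra_map \<phi>"
  shows "of_nat (fact k) * \<phi> (inverse (fact k)) = 1"
proof -
  have "\<phi> (of_nat (fact k) * inverse (fact k)) = 1"
    using assms unfolding K_algebra_map_def by simp
  moreover have "\<phi> (of_nat (fact k) * inverse (fact k)) = \<phi> (of_nat (fact k)) * \<phi> (inverse (fact k))"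
    using assms unfolding K_algebra_map_def by blast
  moreover have "\<phi> (of_nat (fact k)) = of_nat (fact k)" by (rule phi_of_nat[OF assms])
  ultimately show ?thesis by (simp only: of_nat_fact)
qed

lemma pow_nth:
  fixes \<phi> :: "'k::field_char_0 \<Rightarrow> 'a::comm_ring_1"
  assumes "K_algebra_map \<phi>" "Bv 0 = 0"
  shows "(Abs_fps (\<lambda>n. Bv n * \<phi> (inverse (fact n))) ^ k) $ n = \<phi> (inverse (fact n)) * qf Bv k n"
proof (induction k arbitrary: n)
  case 0
  have "\<phi> 1 = 1" using assms(1) unfolding K_algebra_map_def by simp
  then show ?case by simp
next
  case (Suc k)
  have "(Abs_fps (\<lambda>n. Bv n * \<phi> (inverse (fact n))) ^ Suc k) $ n
      = (\<Sum>i=0..n. Bv i * \<phi> (inverse (fact i)) * (\<phi> (inverse (fact (n - i))) * qf Bv k (n - i)))"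
    by (simp add: fps_mult_nth Suc)
  also have "\<dots> = (\<Sum>i=0..n. \<phi> (inverse (fact n)) * (of_nat (n choose i) * Bv i * qf Bv k (n - i)))"
  proof (rule sum.cong[OF refl])
    fix i assume "i \<in> {0..n}"
    then have "\<phi> (inverse (fact i)) * \<phi> (inverse (fact (n - i))) = of_nat (n choose i) * \<phi> (inverse (fact n))"
      using c_mult[OF assms(1)] by auto
    then show "Bv i * \<phi> (inverse (fact i)) * (\<phi> (inverse (fact (n - i))) * qf Bv k (n - i))
        = \<phi> (inverse (fact n)) * (of_nat (n choose i) * Bv i * qf Bv k (n - i))"
    proof -
      have "Bv i * \<phi> (inverse (fact i)) * (\<phi> (inverse (fact (n - i))) * qf Bv k (n - i))
          = (\<phi> (inverse (fact i)) * \<phi> (inverse (fact (n - i)))) * (Bv i * qf Bv k (n - i))"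
        by (simp only: ac_simps)
      also have "\<dots> = (of_nat (n choose i) * \<phi> (inverse (fact n))) * (Bv i * qf Bv k (n - i))"
        by (simp only: \<open>\<phi> (inverse (fact i)) * \<phi> (inverse (fact (n - i))) = of_nat (n choose i) * \<phi> (inverse (fact n))\<close>)
      also have "\<dots> = \<phi> (inverse (fact n)) * (of_nat (n choose i) * Bv i * qf Bv k (n - i))"
        by (simp only: ac_simps)
      finally show ?thesis .
    qed
  qed
  also have "\<dots> = \<phi> (inverse (fact n)) * qf Bv (Suc k) n"
    by (simp add: sum_distrib_left atLeast0AtMost)
  finally show ?case .
qed

lemma compose_nth:
  fixes \<phi> :: "'k::field_char_0 \<Rightarrow> 'a::comm_ring_1"
  assumes "K_algebra_map \<phi>" "Bv 0 = 0" "A 0 = 0"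
  shows "(Abs_fps (\<lambda>n. A n * \<phi> (inverse (fact n))) oo Abs_fps (\<lambda>n. Bv n * \<phi> (inverse (fact n)))) $ n
     = \<phi> (inverse (fact n)) * (\<Sum>\<pi>\<in>{\<pi>. partition_on {1..n} \<pi>}. A (card \<pi>) * (\<Prod>B\<in>\<pi>. Bv (card B)))"
proof -
  let ?c = "\<lambda>n. \<phi> (inverse (fact n))"
  let ?U = "{1..n::nat}"
  have "(Abs_fps (\<lambda>n. A n * ?c n) oo Abs_fps (\<lambda>n. Bv n * ?c n)) $ n
      = (\<Sum>k=0..n. A k * ?c k * (?c n * qf Bv k n))"
    by (simp add: fps_compose_nth pow_nth[where Bv=Bv, OF assms(1,2)])
  also have "\<dots> = (\<Sum>k=0..n. ?c n * (A k * Rf Bv k ?U))"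
  proof (rule sum.cong[OF refl])
    fix k
    have "qf Bv k n = of_nat (fact k) * Rf Bv k ?U"
      using Qf_qf[of ?U Bv k] Qf_Rf[of ?U Bv k] assms(2) by simp
    then show "A k * ?c k * (?c n * qf Bv k n) = ?c n * (A k * Rf Bv k ?U)"
    proof -
      have "A k * ?c k * (?c n * qf Bv k n) = (?c n * (A k * Rf Bv k ?U)) * (of_nat (fact k) * ?c k)"
        unfolding \<open>qf Bv k n = of_nat (fact k) * Rf Bv k ?U\<close> by (simp only: ac_simps)
      then show ?thesis using c_fact[OF assms(1), of k] by simp
    qed
  qed
  also have "\<dots> = ?c n * (\<Sum>k=0..n. \<Sum>\<pi>\<in>{\<pi>. \<pi> \<in> {\<pi>. partition_on ?U \<pi>} \<and> card \<pi> = k}. A (card \<pi>) * (\<Prod>B\<in>\<pi>. Bv (card B)))"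
    by (simp add: sum_distrib_left Rf_def)
  also have "(\<Sum>k=0..n. \<Sum>\<pi>\<in>{\<pi>. \<pi> \<in> {\<pi>. partition_on ?U \<pi>} \<and> card \<pi> = k}. A (card \<pi>) * (\<Prod>B\<in>\<pi>. Bv (card B)))
     = (\<Sum>\<pi>\<in>{\<pi>. partition_on ?U \<pi>}. A (card \<pi>) * (\<Prod>B\<in>\<pi>. Bv (card B)))"
    by (rule sum.group) (use finitely_many_partition_on[of ?U] partition_card_le[of ?U] in auto)
  finally show ?thesis .
qed

context set_operad begin

lemma otype_rl:
  assumes "finite U" "bij_betw \<sigma> U W" "s \<in> M U"
  shows "otype rl W (rl \<sigma> s) = otype rl U s"
proof
  show "otype rl W (rl \<sigma> s) \<subseteq> otype rl U s"
  proof
    fix x assume "x \<in> otype rl W (rl \<sigma> s)"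
    then obtain V \<tau> where x: "x = (V, rl \<tau> (rl \<sigma> s))" "finite V" "bij_betw \<tau> W V"
      unfolding otype_def by auto
    have "rl \<tau> (rl \<sigma> s) = rl (\<tau> \<circ> \<sigma>) s" using rl_comp[OF assms(1,2) x(3) assms(3)] by simp
    moreover have "bij_betw (\<tau> \<circ> \<sigma>) U V" using assms(2) x(3) by (rule bij_betw_trans)
    ultimately show "x \<in> otype rl U s" using x unfolding otype_def by auto
  qed
next
  show "otype rl U s \<subseteq> otype rl W (rl \<sigma> s)"
  proof
    fix x assume "x \<in> otype rl U s"
    then obtain V \<tau> where x: "x = (V, rl \<tau> s)" "finite V" "bij_betw \<tau> U V"
      unfolding otype_def by auto
    define \<tau>' where "\<tau>' = \<tau> \<circ> inv_into U \<sigma>"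
    have b: "bij_betw \<tau>' W V" unfolding \<tau>'_def
      using bij_betw_trans[OF bij_betw_inv_into[OF assms(2)] x(3)] .
    have "rl \<tau>' (rl \<sigma> s) = rl (\<tau>' \<circ> \<sigma>) s" using rl_comp[OF assms(1,2) b assms(3)] by simp
    also have "\<dots> = rl \<tau> s"
      using assms(2) by (intro rl_local[OF assms(3)]) (auto simp: \<tau>'_def bij_betw_def)
    finally show "x \<in> otype rl W (rl \<sigma> s)" using x b unfolding otype_def by force
  qed
qed

lemma sum_M_card:
  assumes "finite U"
  shows "(\<Sum>s\<in>M U. \<omega> (otype rl U s)) = wcard M (\<lambda>U m. \<omega> (otype rl U m)) (card U)"
proof -
  obtain \<sigma> where \<sigma>: "bij_betw \<sigma> U {1..card U}"
    using finite_same_card_bij[OF assms, of "{1..card U}"] by auto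
  have \<sigma>': "bij_betw (inv_into U \<sigma>) {1..card U} U" using bij_betw_inv_into[OF \<sigma>] .
  have bij: "bij_betw (rl \<sigma>) (M U) (M {1..card U})"
  proof (rule bij_betw_byWitness[where f' = "rl (inv_into U \<sigma>)"])
    show "\<forall>a\<in>M U. rl (inv_into U \<sigma>) (rl \<sigma> a) = a"
    proof
      fix a assume a: "a \<in> M U"
      have "rl (inv_into U \<sigma>) (rl \<sigma> a) = rl (inv_into U \<sigma> \<circ> \<sigma>) a"
        using rl_comp[OF assms \<sigma> \<sigma>' a] by simp
      also have "\<dots> = rl id a" using \<sigma> by (intro rl_local[OF a]) (auto simp: bij_betw_def)
      finally show "rl (inv_into U \<sigma>) (rl \<sigma> a) = a" using rl_id[OF a] by simp
    qed
    show "\<forall>a\<in>M {1..card U}. rl \<sigma> (rl (inv_into U \<sigma>) a) = a"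
    proof
      fix a assume a: "a \<in> M {1..card U}"
      have "rl \<sigma> (rl (inv_into U \<sigma>) a) = rl (\<sigma> \<circ> inv_into U \<sigma>) a"
        using rl_comp[OF _ \<sigma>' \<sigma> a] by simp
      also have "\<dots> = rl id a" using \<sigma> by (intro rl_local[OF a]) (auto simp: bij_betw_def f_inv_into_f)
      finally show "rl \<sigma> (rl (inv_into U \<sigma>) a) = a" using rl_id[OF a] by simp
    qed
    show "rl \<sigma> ` M U \<subseteq> M {1..card U}" using rl_closed[OF assms \<sigma>] by auto
    show "rl (inv_into U \<sigma>) ` M {1..card U} \<subseteq> M U" using rl_closed[OF _ \<sigma>'] by auto
  qed
  have "(\<Sum>s\<in>M U. \<omega> (otype rl U s)) = (\<Sum>s\<in>M U. \<omega> (otype rl {1..card U} (rl \<sigma> s)))"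
    using otype_rl[OF assms \<sigma>] by simp
  also have "\<dots> = (\<Sum>t\<in>M {1..card U}. \<omega> (otype rl {1..card U} t))"
    using sum.reindex_bij_betw[OF bij, of "\<lambda>t. \<omega> (otype rl {1..card U} t)"] .
  finally show ?thesis by (simp add: wcard_def)
qed

lemma comp_structs_eq:
  "comp_structs M U = (SIGMA \<pi>:{\<pi>. partition_on U \<pi>}. PiE \<pi> M \<times> M (Min ` \<pi>))"
  unfolding comp_structs_def PiE_def extensional_def by auto

lemma wcard_conv:
  "wcard M (conv_val M rl eta \<omega>2 \<omega>1) n
   = (\<Sum>\<pi>\<in>{\<pi>. partition_on {1..n} \<pi>}.
        wcard M (\<lambda>U m. \<omega>1 (otype rl U m)) (card \<pi>) * (\<Prod>B\<in>\<pi>. wcard M (\<lambda>U m. \<omega>2 (otype rl U m)) (card B)))"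
proof -
  let ?U = "{1..n::nat}"
  define h where "h = (\<lambda>(\<pi>, f, m'). (\<Prod>B\<in>\<pi>. \<omega>2 (otype rl B (f B))) * \<omega>1 (otype rl (Min ` \<pi>) m'))"
  define g where "g = (\<lambda>(\<pi>::nat set set, f::nat set \<Rightarrow> 's, m'::'s). eta \<pi> f m')"
  have finP: "finite {\<pi>. partition_on ?U \<pi>}" by (rule finitely_many_partition_on) simp
  have finPi: "finite (PiE \<pi> M) \<and> finite (M (Min ` \<pi>))" if "partition_on ?U \<pi>" for \<pi>
  proof -
    have "finite \<pi>" using finite_elements[OF _ that] by simp
    moreover have "finite B" if "B \<in> \<pi>" for B
      using partition_onD1[OF \<open>partition_on ?U \<pi>\<close>] that by (auto intro: finite_subset)
    moreover have "finite (Min ` \<pi>)" using \<open>finite \<pi>\<close> by simp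
    ultimately show ?thesis using finite_M by (auto intro!: finite_PiE)
  qed
  have finC: "finite (comp_structs M ?U)"
    unfolding comp_structs_eq using finP finPi by (auto intro!: finite_SigmaI)
  have "wcard M (conv_val M rl eta \<omega>2 \<omega>1) n
      = (\<Sum>m\<in>M ?U. \<Sum>x\<in>{x. x \<in> comp_structs M ?U \<and> g x = m}. h x)"
    unfolding wcard_def conv_val_def h_def g_def
    by (intro sum.cong refl arg_cong2[where f=sum]) auto
  also have "\<dots> = (\<Sum>x\<in>comp_structs M ?U. h x)"
  proof (rule sum.group[OF finC])
    show "finite (M ?U)" by (simp add: finite_M)
    show "g ` comp_structs M ?U \<subseteq> M ?U" unfolding g_def using eta_closed[of ?U] by auto
  qed
  also have "\<dots> = (\<Sum>\<pi>\<in>{\<pi>. partition_on ?U \<pi>}. \<Sum>y\<in>PiE \<pi> M \<times> M (Min ` \<pi>). h (\<pi>, y))"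
    unfolding comp_structs_eq
    using sum.Sigma[of "{\<pi>. partition_on ?U \<pi>}" "\<lambda>\<pi>. PiE \<pi> M \<times> M (Min ` \<pi>)" "\<lambda>\<pi> y. h (\<pi>, y)"]
      finP finPi by (simp add: case_prod_unfold)
  also have "\<dots> = (\<Sum>\<pi>\<in>{\<pi>. partition_on ?U \<pi>}.
        wcard M (\<lambda>U m. \<omega>1 (otype rl U m)) (card \<pi>) * (\<Prod>B\<in>\<pi>. wcard M (\<lambda>U m. \<omega>2 (otype rl U m)) (card B)))"
  proof (rule sum.cong[OF refl])
    fix \<pi> assume "\<pi> \<in> {\<pi>. partition_on ?U \<pi>}"
    then have p: "partition_on ?U \<pi>" by simp
    have fpi: "finite \<pi>" using finite_elements[OF _ p] by simp
    have fB: "finite B" if "B \<in> \<pi>" for B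
      using partition_onD1[OF p] that by (auto intro: finite_subset)
    have "(\<Sum>y\<in>PiE \<pi> M \<times> M (Min ` \<pi>). h (\<pi>, y))
        = (\<Sum>f\<in>PiE \<pi> M. \<Sum>m'\<in>M (Min ` \<pi>). (\<Prod>B\<in>\<pi>. \<omega>2 (otype rl B (f B))) * \<omega>1 (otype rl (Min ` \<pi>) m'))"
      unfolding h_def by (simp add: sum.cartesian_product case_prod_unfold)
    also have "\<dots> = (\<Sum>f\<in>PiE \<pi> M. \<Prod>B\<in>\<pi>. \<omega>2 (otype rl B (f B))) * (\<Sum>m'\<in>M (Min ` \<pi>). \<omega>1 (otype rl (Min ` \<pi>) m'))"
      by (simp add: sum_product)
    also have "(\<Sum>f\<in>PiE \<pi> M. \<Prod>B\<in>\<pi>. \<omega>2 (otype rl B (f B))) = (\<Prod>B\<in>\<pi>. \<Sum>s\<in>M B. \<omega>2 (otype rl B s))"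
      by (rule prod_sum_PiE[symmetric]) (use fpi fB finite_M in auto)
    also have "\<dots> = (\<Prod>B\<in>\<pi>. wcard M (\<lambda>U m. \<omega>2 (otype rl U m)) (card B))"
      using fB sum_M_card by (intro prod.cong) auto
    also have "(\<Sum>m'\<in>M (Min ` \<pi>). \<omega>1 (otype rl (Min ` \<pi>) m')) = wcard M (\<lambda>U m. \<omega>1 (otype rl U m)) (card \<pi>)"
      using sum_M_card[of "Min ` \<pi>" \<omega>1] fpi partition_Min_inj[OF _ p] by simp
    finally show "(\<Sum>y\<in>PiE \<pi> M \<times> M (Min ` \<pi>). h (\<pi>, y)) =
        wcard M (\<lambda>U m. \<omega>1 (otype rl U m)) (card \<pi>) * (\<Prod>B\<in>\<pi>. wcard M (\<lambda>U m. \<omega>2 (otype rl U m)) (card B))"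
      by (simp add: mult.commute)
  qed
  finally show ?thesis .
qed

lemma wcard_one:
  assumes "weight rl e \<omega>"
  shows "wcard M (\<lambda>U m. \<omega> (otype rl U m)) 1 = 1"
  using assms M_singleton[of 1] by (simp add: wcard_def weight_def)

end

theorem mainTheorem3:
  fixes M :: "nat set \<Rightarrow> 's set"
    and rl :: "(nat \<Rightarrow> nat) \<Rightarrow> 's \<Rightarrow> 's"
    and eta :: "nat set set \<Rightarrow> (nat set \<Rightarrow> 's) \<Rightarrow> 's \<Rightarrow> 's"
    and e :: "nat \<Rightarrow> 's"
    and \<phi> :: "'k::field_char_0 \<Rightarrow> 'a::comm_ring_1"
    and \<omega>1 \<omega>2 :: "(nat set \<times> 's) set \<Rightarrow> 'a"
  assumes "set_operad M rl eta e"
    and "K_algebra_map \<phi>"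
    and "weight rl e \<omega>1"
    and "weight rl e \<omega>2"
  shows "egf \<phi> M (\<lambda>U m. \<omega>1 (otype rl U m)) oo egf \<phi> M (\<lambda>U m. \<omega>2 (otype rl U m))
         = egf \<phi> M (conv_val M rl eta \<omega>2 \<omega>1)"
proof -
  interpret set_operad M rl eta e by (rule assms(1))
  define W1 where "W1 = wcard M (\<lambda>U m. \<omega>1 (otype rl U m))"
  define W2 where "W2 = wcard M (\<lambda>U m. \<omega>2 (otype rl U m))"
  define A where "A = (\<lambda>n. if n = 0 then 0 else W1 n)"
  define Bv where "Bv = (\<lambda>n. if n = 0 then 0 else W2 n)"
  have c1: "\<phi> (inverse (fact 1)) = 1" using assms(2) by (simp add: K_algebra_map_def)
  have w1: "W1 1 = 1" unfolding W1_def by (rule wcard_one[OF assms(3)])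
  have w2: "W2 1 = 1" unfolding W2_def by (rule wcard_one[OF assms(4)])
  have p1: "\<phi> 1 = 1" using assms(2) by (simp add: K_algebra_map_def)
  have w1': "W1 (Suc 0) = 1" and w2': "W2 (Suc 0) = 1" using w1 w2 by simp_all
  have e1: "egf \<phi> M (\<lambda>U m. \<omega>1 (otype rl U m)) = Abs_fps (\<lambda>n. A n * \<phi> (inverse (fact n)))"
    by (rule fps_ext) (simp add: egf_def A_def W1_def[symmetric] w1 w1' p1 c1)
  have e2: "egf \<phi> M (\<lambda>U m. \<omega>2 (otype rl U m)) = Abs_fps (\<lambda>n. Bv n * \<phi> (inverse (fact n)))"
    by (rule fps_ext) (simp add: egf_def Bv_def W2_def[symmetric] w2 w2' p1 c1)
  show ?thesis
  proof (rule fps_ext)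
    fix n :: nat
    consider "n = 0" | "n = 1" | "n \<ge> 2" by linarith
    then show "(egf \<phi> M (\<lambda>U m. \<omega>1 (otype rl U m)) oo egf \<phi> M (\<lambda>U m. \<omega>2 (otype rl U m))) $ n
        = egf \<phi> M (conv_val M rl eta \<omega>2 \<omega>1) $ n"
    proof cases
      case 1 then show ?thesis by (simp add: e1 e2 A_def egf_def)
    next
      case 2 then show ?thesis
        by (simp add: e1 e2 A_def Bv_def egf_def fps_compose_nth w1 w2 w2' p1 c1)
    next
      case 3
      have "(egf \<phi> M (\<lambda>U m. \<omega>1 (otype rl U m)) oo egf \<phi> M (\<lambda>U m. \<omega>2 (otype rl U m))) $ n
          = \<phi> (inverse (fact n)) * (\<Sum>\<pi>\<in>{\<pi>. partition_on {1..n} \<pi>}. A (card \<pi>) * (\<Prod>B\<in>\<pi>. Bv (card B)))"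
        unfolding e1 e2 by (rule compose_nth[OF assms(2)]) (simp_all add: A_def Bv_def)
      also have "(\<Sum>\<pi>\<in>{\<pi>. partition_on {1..n} \<pi>}. A (card \<pi>) * (\<Prod>B\<in>\<pi>. Bv (card B)))
          = (\<Sum>\<pi>\<in>{\<pi>. partition_on {1..n} \<pi>}. W1 (card \<pi>) * (\<Prod>B\<in>\<pi>. W2 (card B)))"
      proof (rule sum.cong[OF refl])
        fix \<pi> assume "\<pi> \<in> {\<pi>. partition_on {1..n} \<pi>}"
        then have p: "partition_on {1..n} \<pi>" by simp
        have fpi: "finite \<pi>" using finite_elements[OF _ p] by simp
        have "\<pi> \<noteq> {}" using partition_onD1[OF p] 3 by auto
        then have "card \<pi> \<noteq> 0" using fpi by simp
        moreover have cB: "card B \<noteq> 0" if "B \<in> \<pi>" for B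
          using partition_onD1[OF p] partition_onD3[OF p] that
          by (metis Sup_upper card_0_eq finite_atLeastAtMost finite_subset)
        moreover have "(\<Prod>B\<in>\<pi>. Bv (card B)) = (\<Prod>B\<in>\<pi>. W2 (card B))"
        proof (rule prod.cong[OF refl])
          fix B assume "B \<in> \<pi>"
          then show "Bv (card B) = W2 (card B)" unfolding Bv_def by (rule if_not_P[OF cB])
        qed
        ultimately show "A (card \<pi>) * (\<Prod>B\<in>\<pi>. Bv (card B)) = W1 (card \<pi>) * (\<Prod>B\<in>\<pi>. W2 (card B))"
          unfolding A_def by simp
      qed
      also have "\<dots> = wcard M (conv_val M rl eta \<omega>2 \<omega>1) n"
        unfolding W1_def W2_def by (rule wcard_conv[symmetric])
      finally show ?thesis using 3 by (simp add: egf_def mult.commute)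
    qed
  qed
qed

end
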